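(* Let $x_{k-1},x_k,x_{k+1}$ be consecutive Newton–Anderson iterates with $x_k,x_{k-1}\in B_{\hat r}(x^* )\setminus S$ under Assumption (A), and let $r^e_{k+1}$ and a minimizer $E_{k+1}$ be as in the context. Suppose $r^e_{k+1}\neq1$ and that there is a constant $C>0$ (depending on $f$) with $$\|E_{k+1}\|>C\max\{|1-\gamma_{k+1}|\,\|e_k\|,\;|\gamma_{k+1}|\,\|e_{k-1}\|\}.$$ Then $P_Ne_{k+1}\ne0$ and $\sigma_{k+1}:=\|P_Re_{k+1}\|/\|P_Ne_{k+1}\|$ satisfies $\sigma_{k+1}\le K\max\{\|e_k\|,\|e_{k-1}\|\}$ for a constant $K$ depending only on $f$, $C$ and $r^e_{k+1}$; that is, $\sigma_{k+1}=\mathcal{O}(\max\{\|e_k\|,\|e_{k-1}\|\})$.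
   Context: $f:\mathbb{R}^n\to\mathbb{R}^n$ is $C^3$ with $f(x^* )=0$; norms are Euclidean; $N=\operatorname{null}f'(x^* )\neq\{0\}$, $R=\operatorname{range}f'(x^* )$, $\mathbb{R}^n=N\oplus R$, $P_N,P_R$ orthogonal projections; $S=\{x:\det f'(x)=0\}$. Iterates: $e_k=x_k-x^*$, $w_{k+1}=-f'(x_k)^{-1}f(x_k)$; Newton–Anderson: $x_1=x_0+w_1$, and for $k\ge1$, $\gamma_{k+1}=(w_{k+1}-w_k)^Tw_{k+1}/\|w_{k+1}-w_k\|^2$, $x_{k+1}=x_k+w_{k+1}-\gamma_{k+1}(x_k-x_{k-1}+w_{k+1}-w_k)$. $\hat D(x):N\to N$, $v\mapsto P_Nf''(x^* )(x-x^*,v)$. Assumption (A): for $x\in B_{\hat r}(x^* )\setminus S$, $\hat D(x)$ is invertible on $N$, and $f'(x)^{-1}=\hat D(x)^{-1}P_N+\mathcal{O}(1)$ for $\|x-x^*\|<\hat r$. $T_kv=\tfrac12\hat D(x_k)^{-1}P_Nf''(x_k)(e_k,v)$. Set $q:=e_{k+1}-\tfrac12\big((1-\gamma_{k+1})P_Ne_k+\gamma_{k+1}P_Ne_{k-1}\big)-\big((1-\gamma_{k+1})T_kP_Re_k+\gamma_{k+1}T_{k-1}P_Re_{k-1}\big)$, and $a_1=\tfrac{1-\gamma_{k+1}}{2}P_Ne_k$, $a_2=\tfrac{\gamma_{k+1}}{2}P_Ne_{k-1}$, $a_3=(1-\gamma_{k+1})T_kP_Re_k$, $a_4=\gamma_{k+1}T_{k-1}P_Re_{k-1}$,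 $a_5=P_Nq$ (so $P_Ne_{k+1}=\sum a_i$). $S^e_{k+1}$ is the set of sums $\sum_{i\in I}a_i$ over nonempty proper subsets $I\subsetneq\{1,\dots,5\}$; $r^e_{k+1}=\min\{\|P_Ne_{k+1}-E\|/\|E\|:E\in S^e_{k+1},E\ne0\}$, and $E_{k+1}\in S^e_{k+1}$ attains this minimum. *)

theory Defs
  imports "HOL-Analysis.Analysis"
begin

type_synonym 'n vec = "real^'n"

definition C3 :: "('n::finite vec \<Rightarrow> 'n vec) \<Rightarrow> ('n vec \<Rightarrow> 'n vec \<Rightarrow>\<^sub>L 'n vec)
   \<Rightarrow> ('n vec \<Rightarrow> 'n vec \<Rightarrow>\<^sub>L 'n vec \<Rightarrow>\<^sub>L 'n vec)
   \<Rightarrow> ('n vec \<Rightarrow> 'n vec \<Rightarrow>\<^sub>L 'n vec \<Rightarrow>\<^sub>L 'n vec \<Rightarrow>\<^sub>L 'n vec) \<Rightarrow> bool" where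
  "C3 f Df D2f D3f \<longleftrightarrow>
     (\<forall>x. (f has_derivative blinfun_apply (Df x)) (at x)) \<and>
     (\<forall>x. (Df has_derivative blinfun_apply (D2f x)) (at x)) \<and>
     (\<forall>x. (D2f has_derivative blinfun_apply (D3f x)) (at x)) \<and>
     continuous_on UNIV D3f"

definition jac :: "('n::finite vec \<Rightarrow> 'n vec \<Rightarrow>\<^sub>L 'n vec) \<Rightarrow> 'n vec \<Rightarrow> real^'n^'n" where
  "jac Df x = matrix (blinfun_apply (Df x))"

definition sing_set :: "('n::finite vec \<Rightarrow> 'n vec \<Rightarrow>\<^sub>L 'n vec) \<Rightarrow> 'n vec set" where
  "sing_set Df = {x. det (jac Df x) = 0}"

definition newton_step :: "('n::finite vec \<Rightarrow> 'n vec) \<Rightarrow> ('n vec \<Rightarrow> 'n vec \<Rightarrow>\<^sub>L 'n vec)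
   \<Rightarrow> 'n vec \<Rightarrow> 'n vec" where
  "newton_step f Df x = - (matrix_inv (jac Df x) *v f x)"

definition NA_w :: "('n::finite vec \<Rightarrow> 'n vec) \<Rightarrow> ('n vec \<Rightarrow> 'n vec \<Rightarrow>\<^sub>L 'n vec)
   \<Rightarrow> (nat \<Rightarrow> 'n vec) \<Rightarrow> nat \<Rightarrow> 'n vec" where
  "NA_w f Df x j = newton_step f Df (x (j - 1))"

definition NA_gamma :: "('n::finite vec \<Rightarrow> 'n vec) \<Rightarrow> ('n vec \<Rightarrow> 'n vec \<Rightarrow>\<^sub>L 'n vec)
   \<Rightarrow> (nat \<Rightarrow> 'n vec) \<Rightarrow> nat \<Rightarrow> real" where
  "NA_gamma f Df x k =
     ((NA_w f Df x (k+1) - NA_w f Df x k) \<bullet> NA_w f Df x (k+1)) /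
       (norm (NA_w f Df x (k+1) - NA_w f Df x k))\<^sup>2"

text \<open>x is a Newton--Anderson sequence (depth 1)\<close>
definition NA_seq :: "('n::finite vec \<Rightarrow> 'n vec) \<Rightarrow> ('n vec \<Rightarrow> 'n vec \<Rightarrow>\<^sub>L 'n vec)
   \<Rightarrow> (nat \<Rightarrow> 'n vec) \<Rightarrow> bool" where
  "NA_seq f Df x \<longleftrightarrow>
     x 1 = x 0 + NA_w f Df x 1 \<and>
     (\<forall>k\<ge>1. x (k+1) = x k + NA_w f Df x (k+1)
        - NA_gamma f Df x k *\<^sub>R (x k - x (k-1) + NA_w f Df x (k+1) - NA_w f Df x k))"

definition nullsp :: "('n::finite vec \<Rightarrow> 'n vec \<Rightarrow>\<^sub>L 'n vec) \<Rightarrow> 'n vec \<Rightarrow> 'n vec set" where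
  "nullsp Df xs = {v. blinfun_apply (Df xs) v = 0}"

definition rangesp :: "('n::finite vec \<Rightarrow> 'n vec \<Rightarrow>\<^sub>L 'n vec) \<Rightarrow> 'n vec \<Rightarrow> 'n vec set" where
  "rangesp Df xs = range (blinfun_apply (Df xs))"

definition is_orth_proj :: "('n::finite vec \<Rightarrow> 'n vec) \<Rightarrow> 'n vec set \<Rightarrow> bool" where
  "is_orth_proj P V \<longleftrightarrow> (\<forall>x. P x \<in> V \<and> (\<forall>v\<in>V. (x - P x) \<bullet> v = 0))"

definition Dhat :: "('n::finite vec \<Rightarrow> 'n vec \<Rightarrow>\<^sub>L 'n vec \<Rightarrow>\<^sub>L 'n vec) \<Rightarrow> 'n vec
   \<Rightarrow> ('n vec \<Rightarrow> 'n vec) \<Rightarrow> 'n vec \<Rightarrow> 'n vec \<Rightarrow> 'n vec" where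
  "Dhat D2f xs PN x v = PN (blinfun_apply (blinfun_apply (D2f xs) (x - xs)) v)"

definition assumptionA :: "('n::finite vec \<Rightarrow> 'n vec \<Rightarrow>\<^sub>L 'n vec)
   \<Rightarrow> ('n vec \<Rightarrow> 'n vec \<Rightarrow>\<^sub>L 'n vec \<Rightarrow>\<^sub>L 'n vec) \<Rightarrow> 'n vec \<Rightarrow> ('n vec \<Rightarrow> 'n vec) \<Rightarrow> real \<Rightarrow> bool" where
  "assumptionA Df D2f xs PN rhat \<longleftrightarrow>
     (\<forall>x\<in>ball xs rhat - sing_set Df. bij_betw (Dhat D2f xs PN x) (nullsp Df xs) (nullsp Df xs)) \<and>
     (\<exists>M. \<forall>x\<in>ball xs rhat - sing_set Df. \<forall>v.
        norm (matrix_inv (jac Df x) *v v - inv_into (nullsp Df xs) (Dhat D2f xs PN x) (PN v)) \<le> M * norm v)"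

definition NA_T :: "('n::finite vec \<Rightarrow> 'n vec \<Rightarrow>\<^sub>L 'n vec)
   \<Rightarrow> ('n vec \<Rightarrow> 'n vec \<Rightarrow>\<^sub>L 'n vec \<Rightarrow>\<^sub>L 'n vec) \<Rightarrow> 'n vec \<Rightarrow> ('n vec \<Rightarrow> 'n vec)
   \<Rightarrow> (nat \<Rightarrow> 'n vec) \<Rightarrow> nat \<Rightarrow> 'n vec \<Rightarrow> 'n vec" where
  "NA_T Df D2f xs PN x j v =
     (1/2) *\<^sub>R inv_into (nullsp Df xs) (Dhat D2f xs PN (x j))
        (PN (blinfun_apply (blinfun_apply (D2f (x j)) (x j - xs)) v))"

text \<open>q and the terms a_1..a_5 (for step k+1); a i = 0 outside 1..5 (not used)\<close>
definition NA_q :: "('n::finite vec \<Rightarrow> 'n vec) \<Rightarrow> ('n vec \<Rightarrow> 'n vec \<Rightarrow>\<^sub>L 'n vec)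
   \<Rightarrow> ('n vec \<Rightarrow> 'n vec \<Rightarrow>\<^sub>L 'n vec \<Rightarrow>\<^sub>L 'n vec) \<Rightarrow> 'n vec \<Rightarrow> ('n vec \<Rightarrow> 'n vec) \<Rightarrow> ('n vec \<Rightarrow> 'n vec)
   \<Rightarrow> (nat \<Rightarrow> 'n vec) \<Rightarrow> nat \<Rightarrow> 'n vec" where
  "NA_q f Df D2f xs PN PR x k =
     (let g = NA_gamma f Df x k; e = (\<lambda>j. x j - xs) in
      e (k+1) - (1/2) *\<^sub>R ((1 - g) *\<^sub>R PN (e k) + g *\<^sub>R PN (e (k-1)))
        - ((1 - g) *\<^sub>R NA_T Df D2f xs PN x k (PR (e k))
           + g *\<^sub>R NA_T Df D2f xs PN x (k-1) (PR (e (k-1)))))"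

definition NA_a :: "('n::finite vec \<Rightarrow> 'n vec) \<Rightarrow> ('n vec \<Rightarrow> 'n vec \<Rightarrow>\<^sub>L 'n vec)
   \<Rightarrow> ('n vec \<Rightarrow> 'n vec \<Rightarrow>\<^sub>L 'n vec \<Rightarrow>\<^sub>L 'n vec) \<Rightarrow> 'n vec \<Rightarrow> ('n vec \<Rightarrow> 'n vec) \<Rightarrow> ('n vec \<Rightarrow> 'n vec)
   \<Rightarrow> (nat \<Rightarrow> 'n vec) \<Rightarrow> nat \<Rightarrow> nat \<Rightarrow> 'n vec" where
  "NA_a f Df D2f xs PN PR x k i =
     (let g = NA_gamma f Df x k; e = (\<lambda>j. x j - xs) in
      if i = 1 then ((1 - g) / 2) *\<^sub>R PN (e k)
      else if i = 2 then (g / 2) *\<^sub>R PN (e (k-1))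
      else if i = 3 then (1 - g) *\<^sub>R NA_T Df D2f xs PN x k (PR (e k))
      else if i = 4 then g *\<^sub>R NA_T Df D2f xs PN x (k-1) (PR (e (k-1)))
      else if i = 5 then PN (NA_q f Df D2f xs PN PR x k)
      else 0)"

definition NA_Se :: "('n::finite vec \<Rightarrow> 'n vec) \<Rightarrow> ('n vec \<Rightarrow> 'n vec \<Rightarrow>\<^sub>L 'n vec)
   \<Rightarrow> ('n vec \<Rightarrow> 'n vec \<Rightarrow>\<^sub>L 'n vec \<Rightarrow>\<^sub>L 'n vec) \<Rightarrow> 'n vec \<Rightarrow> ('n vec \<Rightarrow> 'n vec) \<Rightarrow> ('n vec \<Rightarrow> 'n vec)
   \<Rightarrow> (nat \<Rightarrow> 'n vec) \<Rightarrow> nat \<Rightarrow> 'n vec set" where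
  "NA_Se f Df D2f xs PN PR x k =
     {(\<Sum>i\<in>I. NA_a f Df D2f xs PN PR x k i) | I. I \<noteq> {} \<and> I \<subset> {1..5::nat}}"

definition NA_ratio :: "'n::finite vec \<Rightarrow> ('n vec \<Rightarrow> 'n vec) \<Rightarrow> (nat \<Rightarrow> 'n vec) \<Rightarrow> nat \<Rightarrow> 'n vec \<Rightarrow> real" where
  "NA_ratio xs PN x k E = norm (PN (x (k+1) - xs) - E) / norm E"

end

theory Submission
  imports Defs
begin

lemma sub_null: "subspace (nullsp Df xs)"
  unfolding subspace_def nullsp_def by (auto simp: blinfun.add_right blinfun.scaleR_right)

lemma sub_range: "subspace (rangesp Df xs)"
  unfolding subspace_def rangesp_def
  by (auto simp: blinfun.add_right[symmetric] blinfun.scaleR_right[symmetric] image_iff intro: exI[of _ 0])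

lemma proj_unique:
  assumes P: "is_orth_proj P V" and V: "subspace V" and p: "p \<in> V" and o: "\<forall>v\<in>V. (x - p) \<bullet> v = 0"
  shows "P x = p"
proof -
  have in1: "P x \<in> V" and o1: "\<forall>v\<in>V. (x - P x) \<bullet> v = 0" using P by (auto simp: is_orth_proj_def)
  have d: "P x - p \<in> V" using V in1 p subspace_diff by blast
  have e: "(P x - p) \<bullet> (P x - p) = (x - p) \<bullet> (P x - p) - (x - P x) \<bullet> (P x - p)"
    by (simp add: algebra_simps inner_diff_left inner_diff_right)
  have "(x - p) \<bullet> (P x - p) = 0" using o d by blast
  moreover have "(x - P x) \<bullet> (P x - p) = 0" using o1 d by blast
  ultimately have "(P x - p) \<bullet> (P x - p) = 0" using e by linarith
  then show ?thesis by simp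
qed

lemma proj_props:
  assumes P: "is_orth_proj P V" and V: "subspace V"
  shows "P (x + y) = P x + P y" "P (c *\<^sub>R x) = c *\<^sub>R P x" "P (x - y) = P x - P y"
    "v \<in> V \<Longrightarrow> P v = v" "norm (P x) \<le> norm x" "P 0 = 0" "P x \<in> V"
proof -
  have in1: "\<And>x. P x \<in> V" and o1: "\<And>x v. v \<in> V \<Longrightarrow> (x - P x) \<bullet> v = 0" using P by (auto simp: is_orth_proj_def)
  have o2: "\<And>x v. v \<in> V \<Longrightarrow> x \<bullet> v = P x \<bullet> v"
  proof -
    fix x v assume "v \<in> V"
    then have "(x - P x) \<bullet> v = 0" by (rule o1)
    then show "x \<bullet> v = P x \<bullet> v" by (simp only: inner_diff_left) 
  qed
  show "P (x + y) = P x + P y"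
  proof (rule proj_unique[OF P V])
    show "P x + P y \<in> V" using subspace_add[OF V in1 in1] .
    show "\<forall>v\<in>V. (x + y - (P x + P y)) \<bullet> v = 0"
    proof
      fix v assume v: "v \<in> V"
      have "x + y - (P x + P y) = (x - P x) + (y - P y)" by simp
      then show "(x + y - (P x + P y)) \<bullet> v = 0" using o1[OF v, of x] o1[OF v, of y]
        by (metis add.right_neutral inner_add_left)
    qed
  qed
  show "P (c *\<^sub>R x) = c *\<^sub>R P x"
  proof (rule proj_unique[OF P V])
    show "c *\<^sub>R P x \<in> V" using V in1 by (simp add: subspace_def)
    show "\<forall>v\<in>V. (c *\<^sub>R x - c *\<^sub>R P x) \<bullet> v = 0"
    proof
      fix v assume v: "v \<in> V"
      have "(c *\<^sub>R x - c *\<^sub>R P x) \<bullet> v = c * ((x - P x) \<bullet> v)"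
        by (simp only: scaleR_diff_right[symmetric] inner_scaleR_left)
      then show "(c *\<^sub>R x - c *\<^sub>R P x) \<bullet> v = 0" using o1[OF v] by simp
    qed
  qed
  show "P (x - y) = P x - P y"
  proof (rule proj_unique[OF P V])
    show "P x - P y \<in> V" using subspace_diff[OF V in1 in1] .
    show "\<forall>v\<in>V. (x - y - (P x - P y)) \<bullet> v = 0"
    proof
      fix v assume v: "v \<in> V"
      have "x - y - (P x - P y) = (x - P x) - (y - P y)" by simp
      then show "(x - y - (P x - P y)) \<bullet> v = 0" using o1[OF v, of x] o1[OF v, of y]
        by (metis diff_zero inner_diff_left)
    qed
  qed
  show "v \<in> V \<Longrightarrow> P v = v"
    by (rule proj_unique[OF P V]) auto
  show "P 0 = 0"
    by (rule proj_unique[OF P V]) (auto simp: subspace_0[OF V])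
  show "P x \<in> V" by (rule in1)
  have "(x - P x) \<bullet> P x = 0" using o1 in1 by blast
  then have "norm ((x - P x) + P x) ^ 2 = norm (x - P x) ^ 2 + norm (P x) ^ 2"
    by (metis norm_add_Pythagorean orthogonal_def)
  then have "norm x ^ 2 = norm (x - P x) ^ 2 + norm (P x) ^ 2" by simp
  then have "norm (P x) ^ 2 \<le> norm x ^ 2" by simp
  then show "norm (P x) \<le> norm x"
    by (rule power2_le_imp_le) simp
qed



lemma jac_apply: "jac Df x *v v = blinfun_apply (Df x) v"
  unfolding jac_def using matrix_vector_mul(3)[OF blinfun.bounded_linear_right, of "Df x"]
  by (metis (no_types, lifting))

lemma minv_left:
  assumes "x \<notin> sing_set Df"
  shows "matrix_inv (jac Df x) *v (blinfun_apply (Df x) v) = v"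
proof -
  have "invertible (jac Df x)" using assms invertible_det_nz by (auto simp: sing_set_def)
  then have "\<exists>A'. jac Df x ** A' = mat 1 \<and> A' ** jac Df x = mat 1" by (simp add: invertible_def)
  then have "jac Df x ** matrix_inv (jac Df x) = mat 1 \<and> matrix_inv (jac Df x) ** jac Df x = mat 1"
    unfolding matrix_inv_def by (rule someI_ex)
  then have "matrix_inv (jac Df x) ** jac Df x = mat 1" by blast
  then show ?thesis
    by (metis jac_apply matrix_vector_mul_assoc matrix_vector_mul_lid)
qed

lemma D2_bound:
  assumes "C3 f Df D2f D3f"
  shows "\<exists>L>0. \<forall>y\<in>cball xs r. norm (D2f y) \<le> L"
proof -
  have "\<forall>x. (D2f has_derivative blinfun_apply (D3f x)) (at x)" using assms by (simp add: C3_def)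
  then have "continuous_on UNIV D2f"
    by (meson continuous_at_imp_continuous_on has_derivative_continuous)
  then have "compact (D2f ` cball xs r)"
    by (meson compact_cball compact_continuous_image continuous_on_subset subset_UNIV)
  then have "bounded (D2f ` cball xs r)" by (rule compact_imp_bounded)
  then show ?thesis by (auto simp: bounded_pos)
qed

lemma Df_lip:
  assumes "C3 f Df D2f D3f" and L: "\<forall>y\<in>cball xs r. norm (D2f y) \<le> L"
    and y: "y \<in> cball xs r" and z: "z \<in> cball xs r"
  shows "norm (Df y - Df z) \<le> L * norm (y - z)"
proof (rule differentiable_bound[of "cball xs r" Df "\<lambda>x. blinfun_apply (D2f x)"])
  show "convex (cball xs r)" by simp
  fix x assume "x \<in> cball xs r"
  show "(Df has_derivative blinfun_apply (D2f x)) (at x within cball xs r)"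
    using assms(1) by (auto simp: C3_def intro: has_derivative_at_withinI)
  show "onorm (blinfun_apply (D2f x)) \<le> L" using L \<open>x \<in> cball xs r\<close> by (simp add: norm_blinfun.rep_eq[symmetric])
qed (use y z in auto)

lemma taylor_res:
  assumes C: "C3 f Df D2f D3f" and L: "\<forall>y\<in>cball xs r. norm (D2f y) \<le> L" and L0: "L \<ge> 0"
    and y: "y \<in> cball xs r" and root: "f xs = 0"
  shows "norm (blinfun_apply (Df y) (y - xs) - f y) \<le> L * norm (y - xs) ^ 2"
proof -
  let ?S = "closed_segment y xs"
  have Ssub: "?S \<subseteq> cball xs r" using y by (intro closed_segment_subset) (auto intro: order_trans[OF zero_le_dist])
  have "norm (f xs - f y - blinfun_apply (Df y) (xs - y)) \<le> norm (xs - y) * (L * norm (xs - y))"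
  proof (rule differentiable_bound_linearization[of y xs ?S f "\<lambda>x. blinfun_apply (Df x)"])
    fix t :: real assume "t \<in> {0..1}"
    then show "y + t *\<^sub>R (xs - y) \<in> ?S"
      unfolding closed_segment_def by (auto intro!: exI[of _ t] simp: algebra_simps)
  next
    fix x assume x: "x \<in> ?S"
    show "(f has_derivative blinfun_apply (Df x)) (at x within ?S)"
      using C by (auto simp: C3_def intro: has_derivative_at_withinI)
    have "x \<in> cball xs r" using x Ssub by blast
    have "onorm (blinfun_apply (Df x) - blinfun_apply (Df y)) = norm (Df x - Df y)"
      by (simp add: norm_blinfun.rep_eq minus_blinfun.rep_eq fun_diff_def)
    also have "\<dots> \<le> L * norm (x - y)" using Df_lip[OF C L \<open>x \<in> cball xs r\<close> y] .
    also have "\<dots> \<le> L * norm (xs - y)"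
      using dist_in_closed_segment[OF x] L0 by (simp add: dist_norm mult_left_mono norm_minus_commute)
    finally show "onorm (blinfun_apply (Df x) - blinfun_apply (Df y)) \<le> L * norm (xs - y)" .
  qed simp
  moreover have "f xs - f y - blinfun_apply (Df y) (xs - y) = blinfun_apply (Df y) (y - xs) - f y"
    using root by (simp add: blinfun.diff_right algebra_simps)
  ultimately show ?thesis
    by (simp add: norm_minus_commute power2_eq_square mult.commute mult.left_commute)
qed


lemma Dhat_props:
  assumes PN: "is_orth_proj PN (nullsp Df xs)"
  shows "Dhat D2f xs PN x (a + b) = Dhat D2f xs PN x a + Dhat D2f xs PN x b"
    "norm (Dhat D2f xs PN x z) \<le> norm (D2f xs) * norm (x - xs) * norm z"
proof -
  note pp = proj_props[OF PN sub_null]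
  show "Dhat D2f xs PN x (a + b) = Dhat D2f xs PN x a + Dhat D2f xs PN x b"
    unfolding Dhat_def by (simp add: blinfun.add_right pp(1))
  have "norm (Dhat D2f xs PN x z) \<le> norm (blinfun_apply (blinfun_apply (D2f xs) (x - xs)) z)"
    unfolding Dhat_def by (rule pp(5))
  also have "\<dots> \<le> norm (blinfun_apply (D2f xs) (x - xs)) * norm z" by (rule norm_blinfun)
  also have "\<dots> \<le> norm (D2f xs) * norm (x - xs) * norm z"
    by (rule mult_right_mono[OF norm_blinfun]) simp
  finally show "norm (Dhat D2f xs PN x z) \<le> norm (D2f xs) * norm (x - xs) * norm z" .
qed

lemma inv_facts:
  assumes "bij_betw h N N" and "w \<in> N"
  shows "inv_into N h w \<in> N" "h (inv_into N h w) = w"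
proof -
  have "w \<in> h ` N" using assms unfolding bij_betw_def by simp
  then show "inv_into N h w \<in> N" "h (inv_into N h w) = w"
    by (rule inv_into_into, rule f_inv_into_f)
qed

lemma newton_dec:
  assumes PN: "is_orth_proj PN (nullsp Df xs)"
    and bij: "bij_betw (Dhat D2f xs PN y) (nullsp Df xs) (nullsp Df xs)"
    and Mb: "\<forall>v. norm (matrix_inv (jac Df y) *v v - inv_into (nullsp Df xs) (Dhat D2f xs PN y) (PN v)) \<le> M * norm v"
    and yS: "y \<notin> sing_set Df"
  shows "inv_into (nullsp Df xs) (Dhat D2f xs PN y) (PN (blinfun_apply (Df y) (y - xs) - f y)) \<in> nullsp Df xs
    \<and> norm (y - xs + newton_step f Df y - inv_into (nullsp Df xs) (Dhat D2f xs PN y) (PN (blinfun_apply (Df y) (y - xs) - f y)))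
       \<le> M * norm (blinfun_apply (Df y) (y - xs) - f y)"
proof -
  let ?r = "blinfun_apply (Df y) (y - xs) - f y"
  have "PN ?r \<in> nullsp Df xs" using proj_props(7)[OF PN sub_null] .
  then have n: "inv_into (nullsp Df xs) (Dhat D2f xs PN y) (PN ?r) \<in> nullsp Df xs" using inv_facts[OF bij] by blast
  have "matrix_inv (jac Df y) *v ?r = matrix_inv (jac Df y) *v (blinfun_apply (Df y) (y - xs)) - matrix_inv (jac Df y) *v f y"
    by (rule matrix_vector_mult_diff_distrib)
  also have "\<dots> = (y - xs) - matrix_inv (jac Df y) *v f y" by (simp only: minv_left[OF yS])
  also have "\<dots> = y - xs + newton_step f Df y" unfolding newton_step_def by (rule diff_conv_add_uminus)
  finally have eq: "matrix_inv (jac Df y) *v ?r = y - xs + newton_step f Df y" .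
  show ?thesis using n Mb[rule_format, of ?r] unfolding eq by blast
qed

lemma delta_lemma:
  assumes C: "C3 f Df D2f D3f" and PN: "is_orth_proj PN (nullsp Df xs)"
    and L: "\<forall>y\<in>cball xs rhat. norm (D2f y) \<le> L" and L0: "L \<ge> 0" and M0: "M \<ge> 0"
    and x: "x \<in> ball xs rhat" and xS: "x \<notin> sing_set Df"
    and bij: "bij_betw (Dhat D2f xs PN x) (nullsp Df xs) (nullsp Df xs)"
    and Mb: "\<forall>v. norm (matrix_inv (jac Df x) *v v - inv_into (nullsp Df xs) (Dhat D2f xs PN x) (PN v)) \<le> M * norm v"
  shows "norm (PN (blinfun_apply (Df xs) u)) \<le> (norm (D2f xs) * (1 + M * (norm (Df xs) + L * rhat)) + L) * norm (x - xs) * norm u"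
proof -
  note pp = proj_props[OF PN sub_null]
  let ?N = "nullsp Df xs" and ?h = "Dhat D2f xs PN x" and ?Mi = "matrix_inv (jac Df x)"
  define I where "I w = inv_into ?N ?h (PN w)" for w
  define v where "v = blinfun_apply (Df xs) u"
  define d where "d = blinfun_apply (Df x) u - blinfun_apply (Df xs) u"
  define t where "t = norm (x - xs)"
  define U where "U = norm u"
  define a where "a = norm (D2f xs)"
  have t0: "t \<ge> 0" and U0: "U \<ge> 0" and a0: "a \<ge> 0" by (auto simp: t_def U_def a_def)
  have trh: "t \<le> rhat" using x by (simp add: t_def dist_norm norm_minus_commute)
  have "dist xs x < rhat" using x by simp
  then have "0 \<le> rhat" using zero_le_dist[of xs x] by linarith
  then have xc: "x \<in> cball xs rhat" and xsc: "xs \<in> cball xs rhat" using x by auto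
  have "d = blinfun_apply (Df x - Df xs) u" by (simp add: d_def minus_blinfun.rep_eq)
  then have "norm d \<le> norm (Df x - Df xs) * U" by (simp add: U_def norm_blinfun)
  also have "\<dots> \<le> L * t * U" using Df_lip[OF C L xc xsc] U0 by (simp add: t_def mult_right_mono)
  finally have nd: "norm d \<le> L * t * U" .
  have nv: "norm v \<le> norm (Df xs) * U" by (simp add: v_def U_def norm_blinfun)
  have sum: "?Mi *v v + ?Mi *v d = u"
    by (simp add: v_def d_def minv_left[OF xS] flip: matrix_vector_right_distrib)
  define z where "z = I v + I d"
  have z_eq: "z = u - (?Mi *v v - I v) - (?Mi *v d - I d)" using sum by (simp add: z_def algebra_simps)
  have "norm z \<le> U + M * norm v + M * norm d"
  proof -
    have "norm z \<le> norm u + norm (?Mi *v v - I v) + norm (?Mi *v d - I d)"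
    proof -
      have "norm (u - (?Mi *v v - I v) - (?Mi *v d - I d)) \<le> norm (u - (?Mi *v v - I v)) + norm (?Mi *v d - I d)"
        by (rule norm_triangle_ineq4)
      moreover have "norm (u - (?Mi *v v - I v)) \<le> norm u + norm (?Mi *v v - I v)" by (rule norm_triangle_ineq4)
      ultimately show ?thesis unfolding z_eq by linarith
    qed
    then show ?thesis using Mb[rule_format, of v] Mb[rule_format, of d] by (simp add: I_def U_def)
  qed
  also have "\<dots> \<le> U + M * (norm (Df xs) * U) + M * (L * t * U)"
    using nv nd M0 by (intro add_mono mult_left_mono) auto
  also have "\<dots> \<le> U + M * (norm (Df xs) * U) + M * (L * rhat * U)"
    using trh M0 L0 U0 by (intro add_mono mult_left_mono mult_right_mono) auto
  finally have nz: "norm z \<le> U + M * (norm (Df xs) * U) + M * (L * rhat * U)" .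
  have Iv: "I v \<in> ?N" "?h (I v) = PN v" and Id: "I d \<in> ?N" "?h (I d) = PN d"
    using inv_facts[OF bij pp(7)] by (auto simp: I_def)
  have hz: "?h z = PN v + PN d" by (simp add: z_def Dhat_props(1)[OF PN] Iv Id)
  have "norm (?h z) \<le> a * t * norm z" using Dhat_props(2)[OF PN] by (simp add: a_def t_def)
  also have "\<dots> \<le> a * t * (U + M * (norm (Df xs) * U) + M * (L * rhat * U))"
    using nz a0 t0 by (intro mult_left_mono) auto
  finally have nh: "norm (?h z) \<le> a * t * (U + M * (norm (Df xs) * U) + M * (L * rhat * U))" .
  have "norm (PN v) \<le> norm (?h z) + norm (PN d)"
  proof -
    have "PN v = ?h z - PN d" using hz by simp
    then show ?thesis using norm_triangle_ineq4[of "?h z" "PN d"] by simp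
  qed
  also have "\<dots> \<le> norm (?h z) + norm d" using pp(5)[of d] by simp
  also have "\<dots> \<le> a * t * (U + M * (norm (Df xs) * U) + M * (L * rhat * U)) + L * t * U"
    using nh nd by simp
  also have "\<dots> = (a * (1 + M * (norm (Df xs) + L * rhat)) + L) * t * U" by (simp add: algebra_simps)
  finally show ?thesis by (simp add: v_def a_def t_def U_def)
qed


lemma final_arith:
  fixes nP nQ nb \<theta> \<delta> m1 m2 M L c :: real
  assumes "nP > 0" "\<delta> > 0" "c > 0" "\<theta> \<le> m2 / \<delta>" "nQ \<le> \<theta> * nP + 2 * nb"
    "nb \<le> 2 * M * L * m1 * m2" "c * m1 \<le> nP" "M \<ge> 0" "L \<ge> 0" "m2 \<ge> 0" "m1 \<ge> 0"
  shows "nQ / nP \<le> (1 / \<delta> + 4 * M * L / c) * m2"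
proof -
  have m1: "m1 \<le> nP / c" using assms by (simp add: field_simps)
  have "4 * M * L * m2 \<ge> 0" using assms by simp
  then have a: "(4 * M * L * m2) * m1 \<le> (4 * M * L * m2) * (nP / c)" by (rule mult_left_mono[OF m1])
  have b: "\<theta> * nP \<le> (m2 / \<delta>) * nP" using assms by (intro mult_right_mono) auto
  have "nQ \<le> (m2 / \<delta>) * nP + (4 * M * L * m2) * (nP / c)"
    using assms(5,6) a b by (simp add: algebra_simps)
  also have "\<dots> = ((1 / \<delta> + 4 * M * L / c) * m2) * nP" using assms by (simp add: field_simps)
  finally show ?thesis using assms(1) by (simp add: divide_le_eq)
qed

theorem lemma5p7:
  fixes f :: "real^'n \<Rightarrow> real^'n"
    and Df :: "'n vec \<Rightarrow> 'n vec \<Rightarrow>\<^sub>L 'n vec"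
    and D2f :: "'n vec \<Rightarrow> 'n vec \<Rightarrow>\<^sub>L 'n vec \<Rightarrow>\<^sub>L 'n vec"
    and D3f :: "'n vec \<Rightarrow> 'n vec \<Rightarrow>\<^sub>L 'n vec \<Rightarrow>\<^sub>L 'n vec \<Rightarrow>\<^sub>L 'n vec"
    and xs :: "real^'n" and PN PR :: "real^'n \<Rightarrow> real^'n" and rhat :: real
  assumes smooth: "C3 f Df D2f D3f"
    and root: "f xs = 0"
    and N_nontriv: "nullsp Df xs \<noteq> {0}"
    and dsum: "nullsp Df xs \<inter> rangesp Df xs = {0}"
              "\<forall>v. \<exists>a\<in>nullsp Df xs. \<exists>b\<in>rangesp Df xs. v = a + b"
    and projN: "is_orth_proj PN (nullsp Df xs)"
    and projR: "is_orth_proj PR (rangesp Df xs)"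
    and rhat_pos: "rhat > 0"
    and A: "assumptionA Df D2f xs PN rhat"
  shows "\<forall>C>0. \<forall>\<rho>. \<rho> \<noteq> 1 \<longrightarrow> (\<exists>K. \<forall>x k E.
      NA_seq f Df x \<and> k \<ge> 1 \<and>
      x k \<in> ball xs rhat - sing_set Df \<and> x (k-1) \<in> ball xs rhat - sing_set Df \<and>
      NA_w f Df x (k+1) \<noteq> NA_w f Df x k \<and>
      E \<in> NA_Se f Df D2f xs PN PR x k \<and> E \<noteq> 0 \<and>
      (\<forall>E'\<in>NA_Se f Df D2f xs PN PR x k. E' \<noteq> 0 \<longrightarrow>
          NA_ratio xs PN x k E \<le> NA_ratio xs PN x k E') \<and>
      NA_ratio xs PN x k E = \<rho> \<and>
      norm E > C * max (\<bar>1 - NA_gamma f Df x k\<bar> * norm (x k - xs))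
                       (\<bar>NA_gamma f Df x k\<bar> * norm (x (k-1) - xs))
      \<longrightarrow> PN (x (k+1) - xs) \<noteq> 0 \<and>
          norm (PR (x (k+1) - xs)) / norm (PN (x (k+1) - xs))
            \<le> K * max (norm (x k - xs)) (norm (x (k-1) - xs)))"
proof -
  let ?N = "nullsp Df xs" and ?B = "ball xs rhat - sing_set Df"
  note ppN = proj_props[OF projN sub_null]
  note ppR = proj_props[OF projR sub_range]
  have bijA: "\<And>y. y \<in> ?B \<Longrightarrow> bij_betw (Dhat D2f xs PN y) ?N ?N"
    using A by (simp add: assumptionA_def)
  obtain M0 where M0: "\<forall>y\<in>?B. \<forall>v. norm (matrix_inv (jac Df y) *v v - inv_into ?N (Dhat D2f xs PN y) (PN v)) \<le> M0 * norm v"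
    using A by (auto simp: assumptionA_def)
  define M where "M = max M0 0"
  have Mge: "M \<ge> 0" by (simp add: M_def)
  have Mb1: "norm (matrix_inv (jac Df y) *v v - inv_into ?N (Dhat D2f xs PN y) (PN v)) \<le> M * norm v"
    if y: "y \<in> ?B" for y and v :: "real^'n"
  proof -
    have "M0 * norm v \<le> M * norm v" by (simp add: M_def mult_right_mono)
    then show ?thesis by (rule order_trans[OF M0[rule_format, OF y]])
  qed
  have Mb: "\<And>y. y \<in> ?B \<Longrightarrow> \<forall>v. norm (matrix_inv (jac Df y) *v v - inv_into ?N (Dhat D2f xs PN y) (PN v)) \<le> M * norm v"
    using Mb1 by blast
  obtain L where L0: "L > 0" and L: "\<forall>y\<in>cball xs rhat. norm (D2f y) \<le> L"
    using D2_bound[OF smooth] by blast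
  define K0 where "K0 = norm (D2f xs) * (1 + M * (norm (Df xs) + L * rhat)) + L"
  have K0pos: "K0 > 0" using L0 Mge rhat_pos by (simp add: K0_def add_nonneg_pos)
  have "\<exists>\<theta> \<delta>. \<delta> > 0 \<and> 0 \<le> \<theta> \<and> \<theta> \<le> 1 \<and> (\<forall>n\<in>?N. norm (PR n) \<le> \<theta> * norm n)
           \<and> (\<forall>y\<in>?B. \<theta> \<le> norm (y - xs) / \<delta>)"
  proof (cases "\<forall>u. PN (blinfun_apply (Df xs) u) = 0")
    case True
    have "\<forall>n\<in>?N. PR n = 0"
    proof
      fix n assume n: "n \<in> ?N"
      have "PR n \<in> rangesp Df xs" by (rule ppR(7))
      then obtain u where u: "PR n = blinfun_apply (Df xs) u" by (auto simp: rangesp_def)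
      have "PN (PR n) = 0" using True u by simp
      then have "(PR n - 0) \<bullet> n = 0" using projN n by (metis is_orth_proj_def)
      then have 1: "PR n \<bullet> n = 0" by simp
      have "(n - PR n) \<bullet> PR n = 0" using projR ppR(7) by (simp add: is_orth_proj_def)
      moreover have "(n - PR n) \<bullet> PR n = n \<bullet> PR n - PR n \<bullet> PR n" by (rule inner_diff_left)
      moreover have "n \<bullet> PR n = PR n \<bullet> n" by (rule inner_commute)
      ultimately have "PR n \<bullet> PR n = 0" using 1 by linarith
      then show "PR n = 0" by simp
    qed
    then show ?thesis by (intro exI[of _ 0] exI[of _ 1]) auto
  next
    case False
    then obtain u0 where u0: "PN (blinfun_apply (Df xs) u0) \<noteq> 0" by blast
    have "u0 \<noteq> 0" using u0 ppN(6) by auto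
    then have nu0: "norm u0 > 0" by simp
    define \<delta> where "\<delta> = norm (PN (blinfun_apply (Df xs) u0)) / (K0 * norm u0)"
    have dpos: "\<delta> > 0" using u0 nu0 K0pos by (simp add: \<delta>_def)
    have "\<forall>y\<in>?B. 1 \<le> norm (y - xs) / \<delta>"
    proof
      fix y assume y: "y \<in> ?B"
      have "norm (PN (blinfun_apply (Df xs) u0)) \<le> K0 * norm (y - xs) * norm u0"
        unfolding K0_def
        by (rule delta_lemma[OF smooth projN L less_imp_le[OF L0] Mge _ _ bijA[OF y] Mb[OF y]]) (use y in auto)
      then have "\<delta> \<le> norm (y - xs)" using nu0 K0pos
        by (simp add: \<delta>_def divide_le_eq mult.commute mult.left_commute)
      then show "1 \<le> norm (y - xs) / \<delta>" using dpos by simp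
    qed
    then show ?thesis using dpos ppR(5) by (intro exI[of _ 1] exI[of _ \<delta>]) auto
  qed
  then obtain \<theta> \<delta> where dpos: "\<delta> > 0" and th0: "0 \<le> \<theta>" and th1: "\<theta> \<le> 1"
    and thPR: "\<forall>n\<in>?N. norm (PR n) \<le> \<theta> * norm n" and thd: "\<forall>y\<in>?B. \<theta> \<le> norm (y - xs) / \<delta>"
    by blast
  have ND: "\<And>y. y \<in> ?B \<Longrightarrow> \<exists>n b. n \<in> ?N \<and> y - xs + newton_step f Df y = n + b \<and> norm b \<le> M * L * norm (y - xs) ^ 2"
  proof -
    fix y assume y: "y \<in> ?B"
    let ?r = "blinfun_apply (Df y) (y - xs) - f y"
    let ?n = "inv_into ?N (Dhat D2f xs PN y) (PN ?r)"
    have nd: "?n \<in> ?N \<and> norm (y - xs + newton_step f Df y - ?n) \<le> M * norm ?r"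
      using newton_dec[OF projN bijA[OF y] Mb[OF y]] y by blast
    have "norm ?r \<le> L * norm (y - xs) ^ 2"
      using taylor_res[OF smooth L less_imp_le[OF L0] _ root] y by auto
    then have "M * norm ?r \<le> M * (L * norm (y - xs) ^ 2)" using Mge by (rule mult_left_mono)
    then show "\<exists>n b. n \<in> ?N \<and> y - xs + newton_step f Df y = n + b \<and> norm b \<le> M * L * norm (y - xs) ^ 2"
      using nd by (intro exI[of _ ?n] exI[of _ "y - xs + newton_step f Df y - ?n"]) auto
  qed
  show ?thesis
  proof (intro allI impI)
    fix C :: real and \<rho> :: real
    assume Cpos: "C > 0" and rho: "\<rho> \<noteq> 1"
    have key: "\<forall>x k E.
      NA_seq f Df x \<and> k \<ge> 1 \<and>
      x k \<in> ?B \<and> x (k-1) \<in> ?B \<and>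
      NA_w f Df x (k+1) \<noteq> NA_w f Df x k \<and>
      E \<in> NA_Se f Df D2f xs PN PR x k \<and> E \<noteq> 0 \<and>
      (\<forall>E'\<in>NA_Se f Df D2f xs PN PR x k. E' \<noteq> 0 \<longrightarrow>
          NA_ratio xs PN x k E \<le> NA_ratio xs PN x k E') \<and>
      NA_ratio xs PN x k E = \<rho> \<and>
      norm E > C * max (\<bar>1 - NA_gamma f Df x k\<bar> * norm (x k - xs))
                       (\<bar>NA_gamma f Df x k\<bar> * norm (x (k-1) - xs))
      \<longrightarrow> PN (x (k+1) - xs) \<noteq> 0 \<and>
          norm (PR (x (k+1) - xs)) / norm (PN (x (k+1) - xs))
            \<le> (1 / \<delta> + 4 * M * L / (\<bar>1 - \<rho>\<bar> * C)) * max (norm (x k - xs)) (norm (x (k-1) - xs))"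
    proof (intro allI impI, elim conjE)
      fix x :: "nat \<Rightarrow> real^'n" and k E
      assume seq: "NA_seq f Df x" and k1: "1 \<le> k" and xk: "x k \<in> ?B" and xk1: "x (k-1) \<in> ?B"
        and E0: "E \<noteq> 0" and rat: "NA_ratio xs PN x k E = \<rho>"
        and Ebig: "norm E > C * max (\<bar>1 - NA_gamma f Df x k\<bar> * norm (x k - xs))
                       (\<bar>NA_gamma f Df x k\<bar> * norm (x (k-1) - xs))"
      define g where "g = NA_gamma f Df x k"
      define m1 where "m1 = max (\<bar>1 - g\<bar> * norm (x k - xs)) (\<bar>g\<bar> * norm (x (k-1) - xs))"
      define m2 where "m2 = max (norm (x k - xs)) (norm (x (k-1) - xs))"
      define P where "P = PN (x (k+1) - xs)"
      have m1_0: "m1 \<ge> 0" and m2_0: "m2 \<ge> 0" by (auto simp: m1_def m2_def le_max_iff_disj)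
      have step: "x (k+1) = x k + newton_step f Df (x k)
          - g *\<^sub>R (x k - x (k-1) + newton_step f Df (x k) - newton_step f Df (x (k-1)))"
        using seq k1 by (simp add: NA_seq_def NA_w_def g_def)
      have ek: "x (k+1) - xs = (1 - g) *\<^sub>R (x k - xs + newton_step f Df (x k))
                + g *\<^sub>R (x (k-1) - xs + newton_step f Df (x (k-1)))"
        unfolding step by (simp add: algebra_simps)
      obtain n1 b1 where n1: "n1 \<in> ?N" and e1: "x k - xs + newton_step f Df (x k) = n1 + b1"
          and b1: "norm b1 \<le> M * L * norm (x k - xs) ^ 2" using ND[OF xk] by blast
      obtain n2 b2 where n2: "n2 \<in> ?N" and e2: "x (k-1) - xs + newton_step f Df (x (k-1)) = n2 + b2"
          and b2: "norm b2 \<le> M * L * norm (x (k-1) - xs) ^ 2" using ND[OF xk1] by blast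
      define n where "n = (1 - g) *\<^sub>R n1 + g *\<^sub>R n2"
      define b where "b = (1 - g) *\<^sub>R b1 + g *\<^sub>R b2"
      have nN: "n \<in> ?N" unfolding n_def using n1 n2 by (simp add: nullsp_def blinfun.add_right blinfun.scaleR_right)
      have enb: "x (k+1) - xs = n + b" unfolding ek e1 e2 n_def b_def by (simp add: algebra_simps)
      have ML0: "M * L \<ge> 0" using Mge L0 by simp
      have "norm b \<le> \<bar>1 - g\<bar> * norm b1 + \<bar>g\<bar> * norm b2"
        unfolding b_def by (metis norm_scaleR norm_triangle_ineq)
      also have "\<dots> \<le> \<bar>1 - g\<bar> * (M * L * norm (x k - xs) ^ 2) + \<bar>g\<bar> * (M * L * norm (x (k-1) - xs) ^ 2)"
        using b1 b2 by (intro add_mono mult_left_mono) auto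
      also have "\<dots> = M * L * ((\<bar>1 - g\<bar> * norm (x k - xs)) * norm (x k - xs) + (\<bar>g\<bar> * norm (x (k-1) - xs)) * norm (x (k-1) - xs))"
        by (simp add: algebra_simps power2_eq_square)
      also have "\<dots> \<le> M * L * (m1 * m2 + m1 * m2)"
        unfolding m1_def m2_def
        using m1_0[unfolded m1_def] by (intro mult_left_mono[OF _ ML0] add_mono mult_mono) auto
      finally have nb: "norm b \<le> 2 * M * L * m1 * m2" by simp
      have Pnb: "P = n + PN b" unfolding P_def enb ppN(1) using ppN(4)[OF nN] by simp
      have Q: "PR (x (k+1) - xs) = PR n + PR b" unfolding enb by (rule ppR(1))
      have ratio: "norm (P - E) = \<rho> * norm E" using rat E0 by (auto simp add: NA_ratio_def P_def field_simps)
      have P0: "P \<noteq> 0"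
      proof
        assume "P = 0"
        then have "\<rho> * norm E = norm E" using ratio by simp
        then show False using rho E0 by simp
      qed
      have "\<bar>1 - \<rho>\<bar> * norm E \<le> norm P"
      proof -
        have "norm E \<le> norm P + norm (P - E)" by (metis norm_minus_commute norm_triangle_sub add.commute)
        moreover have "norm (P - E) \<le> norm P + norm E" by (rule norm_triangle_ineq4)
        ultimately show ?thesis using ratio by (simp add: abs_if algebra_simps)
      qed
      moreover have "\<bar>1 - \<rho>\<bar> * (C * m1) \<le> \<bar>1 - \<rho>\<bar> * norm E"
        using Ebig by (intro mult_left_mono) (auto simp: m1_def g_def)
      ultimately have c1: "(\<bar>1 - \<rho>\<bar> * C) * m1 \<le> norm P" by (simp add: mult.assoc)
      have "norm (PR (x (k+1) - xs)) \<le> norm (PR n) + norm (PR b)" unfolding Q by (rule norm_triangle_ineq)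
      also have "\<dots> \<le> \<theta> * norm n + norm b" using thPR nN ppR(5)[of b] by (intro add_mono) auto
      also have "\<dots> \<le> \<theta> * (norm P + norm b) + norm b"
      proof -
        have "n = P - PN b" using Pnb by simp
        then have "norm n \<le> norm P + norm (PN b)" using norm_triangle_ineq4 by metis
        also have "\<dots> \<le> norm P + norm b" using ppN(5)[of b] by simp
        finally show ?thesis using th0 by (intro add_mono mult_left_mono) auto
      qed
      also have "\<dots> \<le> \<theta> * norm P + 2 * norm b" using th1 mult_right_mono[OF th1 norm_ge_zero[of b]] by (simp add: algebra_simps)
      finally have nQ: "norm (PR (x (k+1) - xs)) \<le> \<theta> * norm P + 2 * norm b" .
      have "\<theta> \<le> norm (x k - xs) / \<delta>" using thd xk by blast
      also have "\<dots> \<le> m2 / \<delta>" using dpos by (simp add: m2_def divide_right_mono)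
      finally have thm2: "\<theta> \<le> m2 / \<delta>" .
      have cpos: "\<bar>1 - \<rho>\<bar> * C > 0" using rho Cpos by simp
      have "norm (PR (x (k+1) - xs)) / norm P \<le> (1 / \<delta> + 4 * M * L / (\<bar>1 - \<rho>\<bar> * C)) * m2"
        by (rule final_arith[OF _ dpos cpos thm2 nQ nb c1 Mge less_imp_le[OF L0] m2_0 m1_0]) (use P0 in simp)
      then show "PN (x (k+1) - xs) \<noteq> 0 \<and>
          norm (PR (x (k+1) - xs)) / norm (PN (x (k+1) - xs))
            \<le> (1 / \<delta> + 4 * M * L / (\<bar>1 - \<rho>\<bar> * C)) * max (norm (x k - xs)) (norm (x (k-1) - xs))"
        using P0 by (simp add: P_def m2_def)
    qed
    from key show "\<exists>K. \<forall>x k E.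
      NA_seq f Df x \<and> k \<ge> 1 \<and>
      x k \<in> ?B \<and> x (k-1) \<in> ?B \<and>
      NA_w f Df x (k+1) \<noteq> NA_w f Df x k \<and>
      E \<in> NA_Se f Df D2f xs PN PR x k \<and> E \<noteq> 0 \<and>
      (\<forall>E'\<in>NA_Se f Df D2f xs PN PR x k. E' \<noteq> 0 \<longrightarrow>
          NA_ratio xs PN x k E \<le> NA_ratio xs PN x k E') \<and>
      NA_ratio xs PN x k E = \<rho> \<and>
      norm E > C * max (\<bar>1 - NA_gamma f Df x k\<bar> * norm (x k - xs))
                       (\<bar>NA_gamma f Df x k\<bar> * norm (x (k-1) - xs))
      \<longrightarrow> PN (x (k+1) - xs) \<noteq> 0 \<and>
          norm (PR (x (k+1) - xs)) / norm (PN (x (k+1) - xs))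
            \<le> K * max (norm (x k - xs)) (norm (x (k-1) - xs))"
      by blast
  qed
qed

end
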